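(* Let $p,q\in\mathbb{C}$ and consider the system of difference equations ($m\mathcal{H}1$) $$u_2=v+t\frac{p-q}{s-t},\qquad v_1=u+s\frac{p-q}{s-t},\qquad s_2=\frac{1}{t}+\frac{p-q}{t(u-v)},\qquad t_1=\frac{1}{s}+\frac{p-q}{s(u-v)}.$$ Then: (1) the system implies $\dfrac{s_2}{t_1}=\dfrac{s}{t}$ and $u_2-v_1+\dfrac{p-q}{2}=-\Big(u-v+\dfrac{p-q}{2}\Big)$; (2) for solutions of the system, $tu=sv$ holds if and only if $u_2s_2=t_1v_1$ holds; (3) the system extends to multi-dimensions as $$X^i_j=X^j+Y^j\frac{p^i-p^j}{Y^i-Y^j},\qquad Y^i_j=\frac{1}{Y^j}+\frac{1}{Y^j}\,\frac{p^i-p^j}{X^i-X^j},\qquad i\neq j\in\{1,\dots,n\},$$ and this extended system is multi-dimensionally compatible, i.e. $X^i_{jk}=X^i_{kj}$ and $Y^i_{jk}=Y^i_{kj}$ for all pairwise distinct $i,j,k$; (4) the system arises as the compatibility condition $$L(u_2,s_2;p,\lambda)\,L(v,t;q,\lambda)=L(v_1,t_1;q,\lambda)\,L(u,s;p,\lambda)\quad(\text{for all }\lambda)$$ of the linear system $\Psi_1=L(u,s;p,\lambda)\Psi$, $\Psi_2=L(v,t;q,\lambda)\Psi$, where $$L(u,s;p,\lambda)=\begin{pmatrix}0&0&-u&s(u+p-\lambda)\\0&0&-1&s\\-1&u+p-\lambda&0&0\\-s&su&0&0\end{pmatrix};$$ (5) the companion map $\phi^c:(u,s,v_1,t_1)\mapsto(u_2,s_2,v,t)$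 is a Yang–Baxter map.
   Context: Setting on the $\mathbb{Z}^2$ graph: $u,s$ are complex functions on horizontal edges $\{(m,n),(m+1,n)\}$ and $v,t$ on vertical edges $\{(m,n),(m,n+1)\}$ (each edge labelled by its initial vertex). For an elementary square with lower-left vertex $(m,n)$, $u,s$ are the values on its bottom edge, $v,t$ on its left edge, $u_2,s_2$ on its top edge and $v_1,t_1$ on its right edge; $p$ depends only on $m$ and $q$ only on $n$. In the multi-component notation, $X^i,Y^i$ are functions on the edges of $\mathbb{Z}^n$ parallel to the $i$-th coordinate direction, $p^i$ is a parameter attached to direction $i$ (depending only on the $i$-th coordinate), a subscript $j$ denotes the unit shift in direction $j$, and $X^1=u,Y^1=s,X^2=v,Y^2=t,p^1=p,p^2=q$. Multi-dimensional compatibility means that computing $X^i_{jk},Y^i_{jk}$ from the system by shifting first in direction $j$ then in direction $k$ gives identically the same rational expressions as shifting first in $k$ then in $j$. The system defines (for fixed $p,q$) a map $\phi:(u,s,v,t)\mapsto(u_2,s_2,v_1,t_1)$; its companion map is $\phi^c:(u,s,v_1,t_1)\mapsto(u_2,s_2,v,t)$, obtained by solving the system for $(u_2,s_2,v,t)$. A map $R:(x_i,y_i,\alpha_i;x_j,y_j,\alpha_j)\mapsto(x_i',y_i',\alpha_i;x_j',y_j',\alpha_j)$ (parameters $\alpha$ carried along unchanged) is a Yang–Baxter map if $R_{12}R_{13}R_{23}=R_{23}R_{13}R_{12}$ as maps on triples, where $R_{ij}$ acts as $R$ on the $i$-th and $j$-th factors and as identity on the remaining one. *)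

theory Defs
  imports Complex_Main "Jordan_Normal_Form.Matrix"
begin

definition mH1 :: "complex \<Rightarrow> complex \<Rightarrow> complex \<Rightarrow> complex \<Rightarrow> complex \<Rightarrow> complex
    \<Rightarrow> complex \<times> complex \<times> complex \<times> complex" where
  "mH1 p q u s v t =
     (v + t * (p - q) / (s - t),
      1 / t + (p - q) / (t * (u - v)),
      u + s * (p - q) / (s - t),
      1 / s + (p - q) / (s * (u - v)))"

definition mH1_generic :: "complex \<Rightarrow> complex \<Rightarrow> complex \<Rightarrow> complex \<Rightarrow> bool" where
  "mH1_generic u s v t \<longleftrightarrow> s \<noteq> t \<and> u \<noteq> v \<and> s \<noteq> 0 \<and> t \<noteq> 0"

text \<open>X i, Y i: values of X^i, Y^i at the current vertex; P i = p^i.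
  The shift of X^i, Y^i in direction j (i \<noteq> j).\<close>
definition shiftX :: "(nat \<Rightarrow> complex) \<Rightarrow> (nat \<Rightarrow> complex) \<Rightarrow> (nat \<Rightarrow> complex) \<Rightarrow> nat \<Rightarrow> nat \<Rightarrow> complex" where
  "shiftX X Y P i j = X j + Y j * (P i - P j) / (Y i - Y j)"

definition shiftY :: "(nat \<Rightarrow> complex) \<Rightarrow> (nat \<Rightarrow> complex) \<Rightarrow> (nat \<Rightarrow> complex) \<Rightarrow> nat \<Rightarrow> nat \<Rightarrow> complex" where
  "shiftY X Y P i j = 1 / Y j + (1 / Y j) * (P i - P j) / (X i - X j)"

text \<open>Fields shifted once in direction j (only meaningful at components \<noteq> j).\<close>
definition shX :: "(nat \<Rightarrow> complex) \<Rightarrow> (nat \<Rightarrow> complex) \<Rightarrow> (nat \<Rightarrow> complex) \<Rightarrow> nat \<Rightarrow> nat \<Rightarrow> complex" where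
  "shX X Y P j = (\<lambda>a. shiftX X Y P a j)"

definition shY :: "(nat \<Rightarrow> complex) \<Rightarrow> (nat \<Rightarrow> complex) \<Rightarrow> (nat \<Rightarrow> complex) \<Rightarrow> nat \<Rightarrow> nat \<Rightarrow> complex" where
  "shY X Y P j = (\<lambda>a. shiftY X Y P a j)"

text \<open>X^i_{jk}: shift first in direction j, then in direction k.\<close>
definition Xjk :: "(nat \<Rightarrow> complex) \<Rightarrow> (nat \<Rightarrow> complex) \<Rightarrow> (nat \<Rightarrow> complex) \<Rightarrow> nat \<Rightarrow> nat \<Rightarrow> nat \<Rightarrow> complex" where
  "Xjk X Y P i j k = shiftX (shX X Y P j) (shY X Y P j) P i k"

definition Yjk :: "(nat \<Rightarrow> complex) \<Rightarrow> (nat \<Rightarrow> complex) \<Rightarrow> (nat \<Rightarrow> complex) \<Rightarrow> nat \<Rightarrow> nat \<Rightarrow> nat \<Rightarrow> complex" where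
  "Yjk X Y P i j k = shiftY (shX X Y P j) (shY X Y P j) P i k"

definition pair_generic :: "(nat \<Rightarrow> complex) \<Rightarrow> (nat \<Rightarrow> complex) \<Rightarrow> nat \<Rightarrow> nat \<Rightarrow> bool" where
  "pair_generic X Y a b \<longleftrightarrow> X a \<noteq> X b \<and> Y a \<noteq> Y b \<and> Y a \<noteq> 0 \<and> Y b \<noteq> 0"

definition cube_generic :: "(nat \<Rightarrow> complex) \<Rightarrow> (nat \<Rightarrow> complex) \<Rightarrow> (nat \<Rightarrow> complex) \<Rightarrow> nat \<Rightarrow> nat \<Rightarrow> nat \<Rightarrow> bool" where
  "cube_generic X Y P i j k \<longleftrightarrow>
     pair_generic X Y i j \<and> pair_generic X Y i k \<and> pair_generic X Y j k \<and>
     pair_generic (shX X Y P j) (shY X Y P j) i k \<and>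
     pair_generic (shX X Y P k) (shY X Y P k) i j"

definition Lax :: "complex \<Rightarrow> complex \<Rightarrow> complex \<Rightarrow> complex \<Rightarrow> complex mat" where
  "Lax u s p lam = mat_of_rows_list 4
     [[0, 0, -u, s * (u + p - lam)],
      [0, 0, -1, s],
      [-1, u + p - lam, 0, 0],
      [-s, s * u, 0, 0]]"

text \<open>phi^c: (u,s,v1,t1) to (u2,s2,v,t), obtained by solving the system
  for (u2,s2,v,t) (explicit solution; part (5a) of the theorem certifies it).\<close>
definition companion :: "complex \<Rightarrow> complex \<Rightarrow> complex \<Rightarrow> complex \<Rightarrow> complex \<Rightarrow> complex
    \<Rightarrow> complex \<times> complex \<times> complex \<times> complex" where
  "companion p q u s v1 t1 =
     (v1 - (p - q) * s * t1 / (s * t1 - 1),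
      t1 * (v1 - u) / (v1 - u - p + q),
      u - (p - q) / (s * t1 - 1),
      s * (v1 - u - p + q) / (v1 - u))"

definition companion_generic :: "complex \<Rightarrow> complex \<Rightarrow> complex \<Rightarrow> complex \<Rightarrow> complex \<Rightarrow> complex \<Rightarrow> bool" where
  "companion_generic p q u s v1 t1 \<longleftrightarrow>
     p \<noteq> q \<and> s \<noteq> 0 \<and> t1 \<noteq> 0 \<and> s * t1 \<noteq> 1 \<and> v1 \<noteq> u \<and> v1 - u - p + q \<noteq> 0"

definition Rc :: "complex \<Rightarrow> complex \<Rightarrow> complex \<times> complex \<Rightarrow> complex \<times> complex
    \<Rightarrow> (complex \<times> complex) \<times> (complex \<times> complex)" where
  "Rc a b z w = (case companion a b (fst z) (snd z) (fst w) (snd w) of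
                   (u2, s2, v, t) \<Rightarrow> ((u2, s2), (v, t)))"

definition Rc_generic :: "complex \<Rightarrow> complex \<Rightarrow> complex \<times> complex \<Rightarrow> complex \<times> complex \<Rightarrow> bool" where
  "Rc_generic a b z w \<longleftrightarrow> companion_generic a b (fst z) (snd z) (fst w) (snd w)"

type_synonym ('x, 'a) pmap = "'a \<Rightarrow> 'a \<Rightarrow> 'x \<Rightarrow> 'x \<Rightarrow> 'x \<times> 'x"

definition R12 :: "('x, 'a) pmap \<Rightarrow> 'a \<Rightarrow> 'a \<Rightarrow> 'a \<Rightarrow> 'x \<times> 'x \<times> 'x \<Rightarrow> 'x \<times> 'x \<times> 'x" where
  "R12 R a1 a2 a3 z = (case z of (z1, z2, z3) \<Rightarrow> (fst (R a1 a2 z1 z2), snd (R a1 a2 z1 z2), z3))"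

definition R13 :: "('x, 'a) pmap \<Rightarrow> 'a \<Rightarrow> 'a \<Rightarrow> 'a \<Rightarrow> 'x \<times> 'x \<times> 'x \<Rightarrow> 'x \<times> 'x \<times> 'x" where
  "R13 R a1 a2 a3 z = (case z of (z1, z2, z3) \<Rightarrow> (fst (R a1 a3 z1 z3), z2, snd (R a1 a3 z1 z3)))"

definition R23 :: "('x, 'a) pmap \<Rightarrow> 'a \<Rightarrow> 'a \<Rightarrow> 'a \<Rightarrow> 'x \<times> 'x \<times> 'x \<Rightarrow> 'x \<times> 'x \<times> 'x" where
  "R23 R a1 a2 a3 z = (case z of (z1, z2, z3) \<Rightarrow> (z1, fst (R a2 a3 z2 z3), snd (R a2 a3 z2 z3)))"

definition ok12 :: "('a \<Rightarrow> 'a \<Rightarrow> 'x \<Rightarrow> 'x \<Rightarrow> bool) \<Rightarrow> 'a \<Rightarrow> 'a \<Rightarrow> 'a \<Rightarrow> 'x \<times> 'x \<times> 'x \<Rightarrow> bool" where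
  "ok12 G a1 a2 a3 z = (case z of (z1, z2, z3) \<Rightarrow> G a1 a2 z1 z2)"
definition ok13 :: "('a \<Rightarrow> 'a \<Rightarrow> 'x \<Rightarrow> 'x \<Rightarrow> bool) \<Rightarrow> 'a \<Rightarrow> 'a \<Rightarrow> 'a \<Rightarrow> 'x \<times> 'x \<times> 'x \<Rightarrow> bool" where
  "ok13 G a1 a2 a3 z = (case z of (z1, z2, z3) \<Rightarrow> G a1 a3 z1 z3)"
definition ok23 :: "('a \<Rightarrow> 'a \<Rightarrow> 'x \<Rightarrow> 'x \<Rightarrow> bool) \<Rightarrow> 'a \<Rightarrow> 'a \<Rightarrow> 'a \<Rightarrow> 'x \<times> 'x \<times> 'x \<Rightarrow> bool" where
  "ok23 G a1 a2 a3 z = (case z of (z1, z2, z3) \<Rightarrow> G a2 a3 z2 z3)"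

definition yang_baxter :: "('x, 'a) pmap \<Rightarrow> ('a \<Rightarrow> 'a \<Rightarrow> 'x \<Rightarrow> 'x \<Rightarrow> bool) \<Rightarrow> bool" where
  "yang_baxter R G \<longleftrightarrow>
    (\<forall>a1 a2 a3 z.
       ok23 G a1 a2 a3 z \<and>
       ok13 G a1 a2 a3 (R23 R a1 a2 a3 z) \<and>
       ok12 G a1 a2 a3 (R13 R a1 a2 a3 (R23 R a1 a2 a3 z)) \<and>
       ok12 G a1 a2 a3 z \<and>
       ok13 G a1 a2 a3 (R12 R a1 a2 a3 z) \<and>
       ok23 G a1 a2 a3 (R13 R a1 a2 a3 (R12 R a1 a2 a3 z))
     \<longrightarrow> R12 R a1 a2 a3 (R13 R a1 a2 a3 (R23 R a1 a2 a3 z)) =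
         R23 R a1 a2 a3 (R13 R a1 a2 a3 (R12 R a1 a2 a3 z)))"

end

theory Submission
  imports Defs
begin

lemma c3:
  fixes xi xj xk yi yj yk pi pj pk :: complex
  assumes ne: "xi \<noteq> xj" "xi \<noteq> xk" "xj \<noteq> xk" "yi \<noteq> yj" "yi \<noteq> yk" "yj \<noteq> yk"
    "yi \<noteq> 0" "yj \<noteq> 0" "yk \<noteq> 0"
  and h1: "1/yj + (1/yj)*(pi-pj)/(xi-xj) \<noteq> 1/yj + (1/yj)*(pk-pj)/(xk-xj)"
  and h2: "1/yk + (1/yk)*(pi-pk)/(xi-xk) \<noteq> 1/yk + (1/yk)*(pj-pk)/(xj-xk)"
  shows "(xj + yj*(pk-pj)/(yk-yj)) + (1/yj + (1/yj)*(pk-pj)/(xk-xj))*(pi-pk)/((1/yj + (1/yj)*(pi-pj)/(xi-xj)) - (1/yj + (1/yj)*(pk-pj)/(xk-xj)))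
       = (xk + yk*(pj-pk)/(yj-yk)) + (1/yk + (1/yk)*(pj-pk)/(xj-xk))*(pi-pj)/((1/yk + (1/yk)*(pi-pk)/(xi-xk)) - (1/yk + (1/yk)*(pj-pk)/(xj-xk)))"
proof -
  have xij: "xi - xj \<noteq> 0" "xi - xk \<noteq> 0" "xj - xk \<noteq> 0" "xk - xj \<noteq> 0" using ne by auto
  have yij: "yi - yj \<noteq> 0" "yi - yk \<noteq> 0" "yj - yk \<noteq> 0" "yk - yj \<noteq> 0" using ne by auto
  define N1 where "N1 = (pi-pj)*(xk-xj) - (pk-pj)*(xi-xj)"
  have e1: "(1/yj + (1/yj)*(pi-pj)/(xi-xj)) - (1/yj + (1/yj)*(pk-pj)/(xk-xj)) = N1/(yj*(xi-xj)*(xk-xj))" unfolding N1_def using xij ne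
    by (simp add: divide_simps) (simp add: algebra_simps)
  have n1: "N1 \<noteq> 0" using e1 h1 by auto
  define N2 where "N2 = (pi-pk)*(xj-xk) - (pj-pk)*(xi-xk)"
  have e2: "(1/yk + (1/yk)*(pi-pk)/(xi-xk)) - (1/yk + (1/yk)*(pj-pk)/(xj-xk)) = N2/(yk*(xi-xk)*(xj-xk))" unfolding N2_def using xij ne
    by (simp add: divide_simps) (simp add: algebra_simps)
  have n2: "N2 \<noteq> 0" using e2 h2 by auto
  show ?thesis unfolding e1 e2 using n1 n2 xij yij ne
    by (simp add: divide_simps) (simp add: N1_def N2_def algebra_simps)
qed

lemma c3Y:
  fixes xi xj xk yi yj yk pi pj pk :: complex
  assumes ne: "xi \<noteq> xj" "xi \<noteq> xk" "xj \<noteq> xk" "yi \<noteq> yj" "yi \<noteq> yk" "yj \<noteq> yk"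
    "yi \<noteq> 0" "yj \<noteq> 0" "yk \<noteq> 0"
  and h1: "xj + yj*(pi-pj)/(yi-yj) \<noteq> xj + yj*(pk-pj)/(yk-yj)"
  and h2: "xk + yk*(pi-pk)/(yi-yk) \<noteq> xk + yk*(pj-pk)/(yj-yk)"
  and h3: "1/yj + (1/yj)*(pk-pj)/(xk-xj) \<noteq> 0"
  and h4: "1/yk + (1/yk)*(pj-pk)/(xj-xk) \<noteq> 0"
  shows "1/(1/yj + (1/yj)*(pk-pj)/(xk-xj)) + (1/(1/yj + (1/yj)*(pk-pj)/(xk-xj)))*(pi-pk)/((xj + yj*(pi-pj)/(yi-yj)) - (xj + yj*(pk-pj)/(yk-yj)))
       = 1/(1/yk + (1/yk)*(pj-pk)/(xj-xk)) + (1/(1/yk + (1/yk)*(pj-pk)/(xj-xk)))*(pi-pj)/((xk + yk*(pi-pk)/(yi-yk)) - (xk + yk*(pj-pk)/(yj-yk)))"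
proof -
  have xij: "xi - xj \<noteq> 0" "xi - xk \<noteq> 0" "xj - xk \<noteq> 0" "xk - xj \<noteq> 0" using ne by auto
  have yij: "yi - yj \<noteq> 0" "yi - yk \<noteq> 0" "yj - yk \<noteq> 0" "yk - yj \<noteq> 0" using ne by auto
  define N1 where "N1 = (pi-pj)*(yk-yj) - (pk-pj)*(yi-yj)"
  have e1: "(xj + yj*(pi-pj)/(yi-yj)) - (xj + yj*(pk-pj)/(yk-yj)) = yj*N1/((yi-yj)*(yk-yj))" unfolding N1_def using yij ne
    by (simp add: divide_simps) (simp add: algebra_simps)
  have n1: "N1 \<noteq> 0" using e1 h1 by auto
  define N2 where "N2 = (pi-pk)*(yj-yk) - (pj-pk)*(yi-yk)"
  have e2: "(xk + yk*(pi-pk)/(yi-yk)) - (xk + yk*(pj-pk)/(yj-yk)) = yk*N2/((yi-yk)*(yj-yk))" unfolding N2_def using yij ne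
    by (simp add: divide_simps) (simp add: algebra_simps)
  have n2: "N2 \<noteq> 0" using e2 h2 by auto
  define M1 where "M1 = xk - xj + (pk - pj)"
  have f1: "1/yj + (1/yj)*(pk-pj)/(xk-xj) = M1/(yj*(xk-xj))" unfolding M1_def using xij ne
    by (simp add: divide_simps)
  have m1: "M1 \<noteq> 0" using f1 h3 by auto
  define M2 where "M2 = xj - xk + (pj - pk)"
  have f2: "1/yk + (1/yk)*(pj-pk)/(xj-xk) = M2/(yk*(xj-xk))" unfolding M2_def using xij ne
    by (simp add: divide_simps)
  have m2: "M2 \<noteq> 0" using f2 h4 by auto
  show ?thesis unfolding e1 e2 f1 f2 using n1 n2 m1 m2 xij yij ne
    by (simp add: divide_simps) (simp add: N1_def N2_def M1_def M2_def algebra_simps)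
qed


lemma part3b:
  assumes "cube_generic X Y P i j k"
  shows "Xjk X Y P i j k = Xjk X Y P i k j \<and> Yjk X Y P i j k = Yjk X Y P i k j"
proof -
  note g = assms[unfolded cube_generic_def pair_generic_def shX_def shY_def shiftX_def shiftY_def]
  have "Xjk X Y P i j k = Xjk X Y P i k j"
    unfolding Xjk_def shiftX_def shX_def shY_def shiftY_def
    by (rule c3) (use g in auto)
  moreover have "Yjk X Y P i j k = Yjk X Y P i k j"
    unfolding Yjk_def shiftX_def shX_def shY_def shiftY_def
    by (rule c3Y) (use g in auto)
  ultimately show ?thesis by blast
qed

definition yb_rel :: "complex \<Rightarrow> complex \<Rightarrow> complex \<Rightarrow> complex \<Rightarrow> complex \<Rightarrow> complex \<Rightarrow> complex \<Rightarrow> complex \<Rightarrow> complex \<Rightarrow> complex \<Rightarrow> bool" where "yb_rel a b x X y Y x' X' y' Y' \<longleftrightarrow>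
  (x - y')*(X*Y-1) = a-b \<and> x' = y - (a-b) - (x - y') \<and> X'*(y-x-(a-b)) = Y*(y-x) \<and> Y'*(y-x) = X*(y-x-(a-b))"
definition yb_gen :: "complex \<Rightarrow> complex \<Rightarrow> complex \<Rightarrow> complex \<Rightarrow> complex \<Rightarrow> complex \<Rightarrow> bool" where "yb_gen a b x X y Y \<longleftrightarrow> a \<noteq> b \<and> X \<noteq> 0 \<and> Y \<noteq> 0 \<and> X*Y \<noteq> 1 \<and> y \<noteq> x \<and> y-x-(a-b) \<noteq> 0"
lemma rel_prod: "yb_rel a b x X y Y x' X' y' Y' \<Longrightarrow> yb_gen a b x X y Y \<Longrightarrow> X'*Y' = X*Y"
  unfolding yb_rel_def yb_gen_def apply (elim conjE) by Groebner_Basis.algebra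
lemma I1:
  fixes d P cB cE cG DF PB PG a1 a2 a3 :: complex
  assumes "cE*(P-1) = a1-a2" "DF = d + (a1-a2) + cE" "PB*d = P*(d-(a2-a3))" "cB*(PB-1) = a1-a3"
    "PG*DF = P*(DF-(a1-a3))" "cG*(PG-1) = a2-a3"
    "P \<noteq> 1" "d \<noteq> 0" "DF \<noteq> 0" "PB \<noteq> 1" "PG \<noteq> 1"
  shows "cB = cE + cG"
  using assms by Groebner_Basis.algebra

lemma I2:
  fixes cA cF Q PF e dab dbc dac :: complex
  assumes h: "cA*(Q-1) = dbc" "PF*(e-dab) = Q*e"
    "cF*(PF-1) = dac" "dac = dab + dbc" "Q \<noteq> 1" "PF \<noteq> 1" "e-dab \<noteq> 0"
  shows "(e-cA-dac)*e*(e-dab-cF) = (e-cA)*(e-dab)*(e-dab-cF-dbc)"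
proof -
  have n1: "Q*e-(e-dab) \<noteq> 0"
  proof
    assume "Q*e-(e-dab) = 0"
    then have "PF*(e-dab) = 1*(e-dab)" using h(2) by simp
    then show False using h(6,7) by simp
  qed
  have n2: "Q - 1 \<noteq> 0" "PF - 1 \<noteq> 0" using h by auto
  have PFe: "PF = Q*e/(e-dab)" using h(2,7) by (simp add: field_simps)
  have cA: "cA = dbc/(Q-1)" using h(1) n2 by (simp add: field_simps)
  have "cF = dac/(PF-1)" using h(3) n2 by (simp add: field_simps)
  also have "... = dac*(e-dab)/(Q*e-(e-dab))" unfolding PFe using n1 h(7) by (simp add: divide_simps)
  finally have cF: "cF = dac*(e-dab)/(Q*e-(e-dab))" .
  show ?thesis unfolding cA cF h(4) using n1 n2 h(7) by (simp add: divide_simps) (simp add: algebra_simps)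
qed

lemma I3:
  fixes cA cC cF Q PC PF e dab dbc dac :: complex
  assumes h: "cA*(Q-1) = dbc" "PC*(e-cA-dac) = Q*(e-cA)" "cC*(PC-1) = dab" "PF*(e-dab) = Q*e"
    "cF*(PF-1) = dac" "dac = dab + dbc" "Q \<noteq> 1" "PC \<noteq> 1" "PF \<noteq> 1" "e-cA-dac \<noteq> 0" "e-dab \<noteq> 0"
  shows "cA + cC = cF"
proof -
  have n1: "Q*e-(e-dab) \<noteq> 0"
  proof
    assume "Q*e-(e-dab) = 0"
    then have "PF*(e-dab) = 1*(e-dab)" using h(4) by simp
    then show False using h(9,11) by simp
  qed
  have n2: "Q - 1 \<noteq> 0" "PF - 1 \<noteq> 0" "PC - 1 \<noteq> 0" using h by auto
  have PFe: "PF = Q*e/(e-dab)" using h(4,11) by (simp add: field_simps)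
  have cA: "cA = dbc/(Q-1)" using h(1) n2 by (simp add: field_simps)
  have "cF = dac/(PF-1)" using h(5) n2 by (simp add: field_simps)
  also have "... = dac*(e-dab)/(Q*e-(e-dab))" unfolding PFe using n1 h(11) by (simp add: divide_simps)
  finally have cF: "cF = dac*(e-dab)/(Q*e-(e-dab))" .
  define E1 where "E1 = e*(Q-1) - dbc"
  define E2 where "E2 = E1 - dac*(Q-1)"
  have ecA: "e - cA = E1/(Q-1)" unfolding cA E1_def using n2 by (simp add: divide_simps)
  have ecA2: "e - cA - dac = E2/(Q-1)" unfolding cA E2_def E1_def using n2 by (simp add: divide_simps)
  have nE2: "E2 \<noteq> 0" using h(10) ecA2 by auto
  have "PC*(E2/(Q-1)) = Q*(E1/(Q-1))" using h(2) ecA2 ecA by metis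
  then have "PC*E2 = Q*E1" using n2 by (simp add: field_simps)
  then have PC: "PC = Q*E1/E2" using nE2 by (simp add: field_simps)
  have n3: "Q*E1 - E2 \<noteq> 0"
  proof
    assume "Q*E1 - E2 = 0"
    then have "PC = 1" using PC nE2 by simp
    then show False using h(8) by simp
  qed
  have "cC = dab/(PC-1)" using h(3) n2 by (simp add: field_simps)
  also have "... = dab*E2/(Q*E1 - E2)" unfolding PC using nE2 by (simp add: divide_simps)
  finally have cC: "cC = dab*E2/(Q*E1 - E2)" .
  show ?thesis unfolding cA cF cC using n1 n2 n3 h(11)
    by (simp add: divide_simps) (simp add: E1_def E2_def h(6) algebra_simps)
qed

lemma I4:
  fixes cB cE P PB d dab dbc dac :: complex
  assumes h: "cE*(P-1) = dab" "PB*d = P*(d-dbc)" "cB*(PB-1) = dac" "dac = dab + dbc" "P \<noteq> 1" "PB \<noteq> 1" "d \<noteq> 0"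
  shows "d*(d+dab+cB)*(d+dab+cE-dac) = (d+dab+cE)*(d-dbc)*(d+cB)"
proof -
  have n2: "P - 1 \<noteq> 0" "PB - 1 \<noteq> 0" using h by auto
  have PB: "PB = P*(d-dbc)/d" using h(2,7) by (simp add: field_simps)
  have n1: "P*(d-dbc) - d \<noteq> 0"
  proof
    assume "P*(d-dbc) - d = 0"
    then have "PB = 1" using PB h(7) by simp
    then show False using h(6) by simp
  qed
  have cE: "cE = dab/(P-1)" using h(1) n2 by (simp add: field_simps)
  have "cB = dac/(PB-1)" using h(3) n2 by (simp add: field_simps)
  also have "... = dac*d/(P*(d-dbc) - d)" unfolding PB using h(7) by (simp add: divide_simps)
  finally have cB: "cB = dac*d/(P*(d-dbc) - d)" .
  show ?thesis unfolding cB cE using n1 n2 h(7)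
    by (simp add: divide_simps) (simp add: h(4) algebra_simps)
qed
lemma YBrel:
  fixes a1 a2 a3 x1 X1 x2 X2 x3 X3 :: complex
  assumes
   A: "yb_rel a2 a3 x2 X2 x3 X3 x2a X2a x3a X3a" "yb_gen a2 a3 x2 X2 x3 X3"
   and B: "yb_rel a1 a3 x1 X1 x3a X3a x1b X1b x3b X3b" "yb_gen a1 a3 x1 X1 x3a X3a"
   and C: "yb_rel a1 a2 x1b X1b x2a X2a x1c X1c x2c X2c" "yb_gen a1 a2 x1b X1b x2a X2a"
   and E: "yb_rel a1 a2 x1 X1 x2 X2 x1e X1e x2e X2e" "yb_gen a1 a2 x1 X1 x2 X2"
   and F: "yb_rel a1 a3 x1e X1e x3 X3 x1f X1f x3f X3f" "yb_gen a1 a3 x1e X1e x3 X3"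
   and G: "yb_rel a2 a3 x2e X2e x3f X3f x2g X2g x3g X3g" "yb_gen a2 a3 x2e X2e x3f X3f"
  shows "x1c = x1f \<and> X1c = X1f \<and> x2c = x2g \<and> X2c = X2g \<and> x3b = x3g \<and> X3b = X3g"
proof -
  have pA: "X2a*X3a = X2*X3" by (rule rel_prod[OF A])
  have pB: "X1b*X3b = X1*X3a" by (rule rel_prod[OF B])
  have pC: "X1c*X2c = X1b*X2a" by (rule rel_prod[OF C])
  have pE: "X1e*X2e = X1*X2" by (rule rel_prod[OF E])
  have pF: "X1f*X3f = X1e*X3" by (rule rel_prod[OF F])
  have pG: "X2g*X3g = X2e*X3f" by (rule rel_prod[OF G])
  note a = A[unfolded yb_rel_def yb_gen_def]
  note b = B[unfolded yb_rel_def yb_gen_def]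
  note c = C[unfolded yb_rel_def yb_gen_def]
  note e = E[unfolded yb_rel_def yb_gen_def]
  note f = F[unfolded yb_rel_def yb_gen_def]
  note g = G[unfolded yb_rel_def yb_gen_def]
  have a1: "(x2 - x3a)*(X2*X3-1) = a2-a3" "x2a = x3 - (a2-a3) - (x2 - x3a)" "X2a*(x3-x2-(a2-a3)) = X3*(x3-x2)" "X3a*(x3-x2) = X2*(x3-x2-(a2-a3))"
    "a2 \<noteq> a3" "X2 \<noteq> 0" "X3 \<noteq> 0" "X2*X3 \<noteq> 1" "x3 \<noteq> x2" "x3-x2-(a2-a3) \<noteq> 0" using a by auto
  have b1: "(x1 - x3b)*(X1*X3a-1) = a1-a3" "x1b = x3a - (a1-a3) - (x1 - x3b)" "X1b*(x3a-x1-(a1-a3)) = X3a*(x3a-x1)" "X3b*(x3a-x1) = X1*(x3a-x1-(a1-a3))"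
    "a1 \<noteq> a3" "X1 \<noteq> 0" "X3a \<noteq> 0" "X1*X3a \<noteq> 1" "x3a \<noteq> x1" "x3a-x1-(a1-a3) \<noteq> 0" using b by auto
  have c1: "(x1b - x2c)*(X1b*X2a-1) = a1-a2" "x1c = x2a - (a1-a2) - (x1b - x2c)" "X1c*(x2a-x1b-(a1-a2)) = X2a*(x2a-x1b)" "X2c*(x2a-x1b) = X1b*(x2a-x1b-(a1-a2))"
    "a1 \<noteq> a2" "X1b \<noteq> 0" "X2a \<noteq> 0" "X1b*X2a \<noteq> 1" "x2a \<noteq> x1b" "x2a-x1b-(a1-a2) \<noteq> 0" using c by auto
  have e1: "(x1 - x2e)*(X1*X2-1) = a1-a2" "x1e = x2 - (a1-a2) - (x1 - x2e)" "X1e*(x2-x1-(a1-a2)) = X2*(x2-x1)" "X2e*(x2-x1) = X1*(x2-x1-(a1-a2))"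
    "a1 \<noteq> a2" "X1 \<noteq> 0" "X2 \<noteq> 0" "X1*X2 \<noteq> 1" "x2 \<noteq> x1" "x2-x1-(a1-a2) \<noteq> 0" using e by auto
  have f1: "(x1e - x3f)*(X1e*X3-1) = a1-a3" "x1f = x3 - (a1-a3) - (x1e - x3f)" "X1f*(x3-x1e-(a1-a3)) = X3*(x3-x1e)" "X3f*(x3-x1e) = X1e*(x3-x1e-(a1-a3))"
    "a1 \<noteq> a3" "X1e \<noteq> 0" "X3 \<noteq> 0" "X1e*X3 \<noteq> 1" "x3 \<noteq> x1e" "x3-x1e-(a1-a3) \<noteq> 0" using f by auto
  have g1: "(x2e - x3g)*(X2e*X3f-1) = a2-a3" "x2g = x3f - (a2-a3) - (x2e - x3g)" "X2g*(x3f-x2e-(a2-a3)) = X3f*(x3f-x2e)" "X3g*(x3f-x2e) = X2e*(x3f-x2e-(a2-a3))"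
    "a2 \<noteq> a3" "X2e \<noteq> 0" "X3f \<noteq> 0" "X2e*X3f \<noteq> 1" "x3f \<noteq> x2e" "x3f-x2e-(a2-a3) \<noteq> 0" using g by auto
  have G3: "x3b = x3g" using pE a1(4) b1(1,8) e1(1,2,8) f1(4,9) g1(1,8) by Groebner_Basis.algebra
  have "(x2-x3a) + (x1b-x2c) = (x1e-x3f)"
    apply (rule I3[where Q="X2*X3" and PC="X1b*X2a" and PF="X1e*X3" and e="x2-x1" and dab="a1-a2" and dbc="a2-a3" and dac="a1-a3"])
    subgoal using a1(1) .
    subgoal using b1(3) pA by Groebner_Basis.algebra
    subgoal using c1(1) .
    subgoal using e1(3) by Groebner_Basis.algebra
    subgoal using f1(1) .
    subgoal by simp
    subgoal using a1(8) .
    subgoal using c1(8) .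
    subgoal using f1(8) .
    subgoal using b1(10) by simp
    subgoal using e1(10) .
    done
  then have G1: "x1c = x1f" using c1(2) a1(2) f1(2) by Groebner_Basis.algebra
  have G2a: "x2c = x3f - (a2-a3) - x2e + x3b" using G1 c1(2) f1(2) a1(2) b1(2) e1(2)
    by (simp add: algebra_simps)
  have G2: "x2c = x2g" using G2a G3 g1(2) by simp
  have i2: "(x2-x1-(x2-x3a)-(a1-a3))*(x2-x1)*(x2-x1-(a1-a2)-(x1e-x3f)) = (x2-x1-(x2-x3a))*(x2-x1-(a1-a2))*(x2-x1-(a1-a2)-(x1e-x3f)-(a2-a3))"
    apply (rule I2[where Q="X2*X3" and PF="X1e*X3"])
    subgoal using a1(1) .
    subgoal using e1(3) by Groebner_Basis.algebra
    subgoal using f1(1) .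
    subgoal by simp
    subgoal using a1(8) .
    subgoal using f1(8) .
    subgoal using e1(10) .
    done
  have H3: "X3b = X3g" using i2 b1(4,9) g1(4,9) e1(2,4,9) by Groebner_Basis.algebra
  have i4: "(x3-x2)*((x3-x2)+(a1-a2)+(x1-x3b))*((x3-x2)+(a1-a2)+(x1-x2e)-(a1-a3)) = ((x3-x2)+(a1-a2)+(x1-x2e))*((x3-x2)-(a2-a3))*((x3-x2)+(x1-x3b))"
    apply (rule I4[where P="X1*X2" and PB="X1*X3a"])
    subgoal using e1(1) .
    subgoal using a1(4) by Groebner_Basis.algebra
    subgoal using b1(1) .
    subgoal by simp
    subgoal using e1(8) .
    subgoal using b1(8) .
    subgoal using a1(9) by simp
    done
  have H1: "X1c = X1f" using i4 c1(3,10) a1(2,3,10) f1(3,10) b1(2) e1(2) by Groebner_Basis.algebra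
  have nz: "X1c \<noteq> 0" "X3b \<noteq> 0" using c1(3,7,9) b1(4,6,10) by auto
  have q1: "X1c*X2c*X3b = X1*X2*X3"
  proof -
    have "X1c*X2c*X3b = X2a*(X1b*X3b)" using pC by (simp add: ac_simps)
    also have "... = X1*(X2a*X3a)" using pB by (simp add: ac_simps)
    finally show ?thesis using pA by (simp add: ac_simps)
  qed
  have q2: "X1f*X2g*X3g = X1*X2*X3"
  proof -
    have "X1f*X2g*X3g = X2e*(X1f*X3f)" using pG by (simp add: ac_simps)
    also have "... = X3*(X1e*X2e)" using pF by (simp add: ac_simps)
    finally show ?thesis using pE by (simp add: ac_simps)
  qed
  have "X1c*X3b*X2c = X1c*X3b*X2g" using q1 q2 H1 H3 by (simp add: ac_simps)
  then have H2: "X2c = X2g" using nz by simp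
  show ?thesis using G1 G2 G3 H1 H2 H3 by blast
qed


lemma Rc_rel:
  assumes g: "Rc_generic a b (x,X) (y,Y)" and r: "Rc a b (x,X) (y,Y) = ((x',X'),(y',Y'))"
  shows "yb_rel a b x X y Y x' X' y' Y' \<and> yb_gen a b x X y Y"
proof -
  have cg: "a \<noteq> b" "X \<noteq> 0" "Y \<noteq> 0" "X*Y \<noteq> 1" "y \<noteq> x" "y - x - a + b \<noteq> 0"
    using g unfolding Rc_generic_def companion_generic_def by auto
  have nz: "X*Y - 1 \<noteq> 0" "y - x \<noteq> 0" "y - x - (a - b) \<noteq> 0" using cg by (auto simp: algebra_simps)
  have E: "x' = y - (a - b) * X * Y / (X * Y - 1)" "X' = Y * (y - x) / (y - x - a + b)"
    "y' = x - (a - b) / (X * Y - 1)" "Y' = X * (y - x - a + b) / (y - x)"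
    using r unfolding Rc_def companion_def by auto
  have E2: "y - x - a + b = y - x - (a - b)" by (simp add: algebra_simps)
  have "yb_rel a b x X y Y x' X' y' Y'" unfolding yb_rel_def E E2 using nz
    by (simp add: divide_simps) (simp add: algebra_simps)
  moreover have "yb_gen a b x X y Y" unfolding yb_gen_def using cg nz by auto
  ultimately show ?thesis by blast
qed

lemma YB: "yang_baxter Rc Rc_generic"
  unfolding yang_baxter_def
proof (intro allI impI)
  fix a1 a2 a3 :: complex and z :: "(complex \<times> complex) \<times> (complex \<times> complex) \<times> (complex \<times> complex)"
  assume H: "ok23 Rc_generic a1 a2 a3 z \<and>
       ok13 Rc_generic a1 a2 a3 (R23 Rc a1 a2 a3 z) \<and>
       ok12 Rc_generic a1 a2 a3 (R13 Rc a1 a2 a3 (R23 Rc a1 a2 a3 z)) \<and>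
       ok12 Rc_generic a1 a2 a3 z \<and>
       ok13 Rc_generic a1 a2 a3 (R12 Rc a1 a2 a3 z) \<and>
       ok23 Rc_generic a1 a2 a3 (R13 Rc a1 a2 a3 (R12 Rc a1 a2 a3 z))"
  obtain x1 X1 x2 X2 x3 X3 where z: "z = ((x1,X1),(x2,X2),(x3,X3))" by (metis prod.exhaust)
  obtain x2a X2a x3a X3a where RA: "Rc a2 a3 (x2,X2) (x3,X3) = ((x2a,X2a),(x3a,X3a))" by (metis prod.exhaust)
  obtain x1b X1b x3b X3b where RB: "Rc a1 a3 (x1,X1) (x3a,X3a) = ((x1b,X1b),(x3b,X3b))" by (metis prod.exhaust)
  obtain x1c X1c x2c X2c where RC: "Rc a1 a2 (x1b,X1b) (x2a,X2a) = ((x1c,X1c),(x2c,X2c))" by (metis prod.exhaust)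
  obtain x1e X1e x2e X2e where RE: "Rc a1 a2 (x1,X1) (x2,X2) = ((x1e,X1e),(x2e,X2e))" by (metis prod.exhaust)
  obtain x1f X1f x3f X3f where RF: "Rc a1 a3 (x1e,X1e) (x3,X3) = ((x1f,X1f),(x3f,X3f))" by (metis prod.exhaust)
  obtain x2g X2g x3g X3g where RG: "Rc a2 a3 (x2e,X2e) (x3f,X3f) = ((x2g,X2g),(x3g,X3g))" by (metis prod.exhaust)
  have L: "R12 Rc a1 a2 a3 (R13 Rc a1 a2 a3 (R23 Rc a1 a2 a3 z)) = ((x1c,X1c),(x2c,X2c),(x3b,X3b))"
    unfolding z R12_def R13_def R23_def by (simp add: RA RB RC)
  have R: "R23 Rc a1 a2 a3 (R13 Rc a1 a2 a3 (R12 Rc a1 a2 a3 z)) = ((x1f,X1f),(x2g,X2g),(x3g,X3g))"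
    unfolding z R12_def R13_def R23_def by (simp add: RE RF RG)
  have gA: "Rc_generic a2 a3 (x2,X2) (x3,X3)" using H unfolding z ok23_def by simp
  have gB: "Rc_generic a1 a3 (x1,X1) (x3a,X3a)" using H unfolding z ok13_def R23_def by (simp add: RA)
  have gC: "Rc_generic a1 a2 (x1b,X1b) (x2a,X2a)" using H unfolding z ok12_def R13_def R23_def by (simp add: RA RB)
  have gE: "Rc_generic a1 a2 (x1,X1) (x2,X2)" using H unfolding z ok12_def by simp
  have gF: "Rc_generic a1 a3 (x1e,X1e) (x3,X3)" using H unfolding z ok13_def R12_def by (simp add: RE)
  have gG: "Rc_generic a2 a3 (x2e,X2e) (x3f,X3f)" using H unfolding z ok23_def R13_def R12_def by (simp add: RE RF)
  have "x1c = x1f \<and> X1c = X1f \<and> x2c = x2g \<and> X2c = X2g \<and> x3b = x3g \<and> X3b = X3g"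
  proof -
    note A = Rc_rel[OF gA RA] and B = Rc_rel[OF gB RB] and C = Rc_rel[OF gC RC]
      and E = Rc_rel[OF gE RE] and F = Rc_rel[OF gF RF] and G = Rc_rel[OF gG RG]
    show ?thesis by (rule YBrel[OF A[THEN conjunct1] A[THEN conjunct2] B[THEN conjunct1] B[THEN conjunct2]
      C[THEN conjunct1] C[THEN conjunct2] E[THEN conjunct1] E[THEN conjunct2]
      F[THEN conjunct1] F[THEN conjunct2] G[THEN conjunct1] G[THEN conjunct2]])
  qed
  then show "R12 Rc a1 a2 a3 (R13 Rc a1 a2 a3 (R23 Rc a1 a2 a3 z)) =
         R23 Rc a1 a2 a3 (R13 Rc a1 a2 a3 (R12 Rc a1 a2 a3 z))" unfolding L R by simp
qed

lemma part1:
  assumes g: "mH1_generic u s v t" and e: "(u2, s2, v1, t1) = mH1 p q u s v t"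
  shows "(t1 \<noteq> 0 \<longrightarrow> s2 / t1 = s / t) \<and> u2 - v1 + (p - q) / 2 = - (u - v + (p - q) / 2)"
proof -
  have nz: "s - t \<noteq> 0" "u - v \<noteq> 0" "s \<noteq> 0" "t \<noteq> 0" using g unfolding mH1_generic_def by auto
  have E: "u2 = v + t * (p - q) / (s - t)" "s2 = 1 / t + (p - q) / (t * (u - v))"
     "v1 = u + s * (p - q) / (s - t)" "t1 = 1 / s + (p - q) / (s * (u - v))"
    using e unfolding mH1_def by auto
  have st: "s2 * t = t1 * s" unfolding E using nz by (simp add: field_simps)
  have A: "t1 \<noteq> 0 \<longrightarrow> s2 / t1 = s / t" using st nz by (auto simp: field_simps)
  have "u2 - v1 = v - u - (p - q)" unfolding E using nz by (simp add: divide_simps) (simp add: algebra_simps)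
  then have B0: "u2 - v1 + (p - q) / 2 = (v - u - (p - q)) + (p - q) / 2" by simp
  have B1: "(v - u - (p - q)) + (p - q) / 2 = - (u - v + (p - q) / 2)" by (simp add: field_simps)
  have B: "u2 - v1 + (p - q) / 2 = - (u - v + (p - q) / 2)" using B0 B1 by simp
  show ?thesis using A B by blast
qed

lemma part2:
  assumes g: "mH1_generic u s v t" and e: "(u2, s2, v1, t1) = mH1 p q u s v t" and t1: "t1 \<noteq> 0"
  shows "t * u = s * v \<longleftrightarrow> u2 * s2 = t1 * v1"
proof -
  have nz: "s - t \<noteq> 0" "u - v \<noteq> 0" "s \<noteq> 0" "t \<noteq> 0" using g unfolding mH1_generic_def by auto
  have E: "u2 = v + t * (p - q) / (s - t)" "s2 = 1 / t + (p - q) / (t * (u - v))"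
     "v1 = u + s * (p - q) / (s - t)" "t1 = 1 / s + (p - q) / (s * (u - v))"
    using e unfolding mH1_def by auto
  define K where "K = (u - v + (p - q)) / (u - v)"
  have t1K: "t1 = K / s" unfolding E K_def using nz by (simp add: field_simps)
  have K: "K \<noteq> 0" using t1 t1K by auto
  have D: "u2 * s2 - t1 * v1 = K * (s * v - t * u) / (s * t)"
    unfolding E K_def using nz by (simp add: divide_simps) (simp add: algebra_simps)
  show ?thesis
  proof
    assume "t * u = s * v" then show "u2 * s2 = t1 * v1" using D by simp
  next
    assume "u2 * s2 = t1 * v1"
    then have "K * (s * v - t * u) / (s * t) = 0" using D by simp
    then show "t * u = s * v" using K nz by simp
  qed
qed

lemma part3a: "mH1 p q u s v t =
        (shiftX (\<lambda>a. if a = 1 then u else v) (\<lambda>a. if a = 1 then s else t) (\<lambda>a. if a = 1 then p else q) 1 2,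
         shiftY (\<lambda>a. if a = 1 then u else v) (\<lambda>a. if a = 1 then s else t) (\<lambda>a. if a = 1 then p else q) 1 2,
         shiftX (\<lambda>a. if a = 1 then u else v) (\<lambda>a. if a = 1 then s else t) (\<lambda>a. if a = 1 then p else q) 2 1,
         shiftY (\<lambda>a. if a = 1 then u else v) (\<lambda>a. if a = 1 then s else t) (\<lambda>a. if a = 1 then p else q) 2 1)"
proof -
  have 1: "(q - p) / (t - s) = (p - q) / (s - t)" by (metis minus_diff_eq minus_divide_divide)
  have 2: "(q - p) / (v - u) = (p - q) / (u - v)" by (metis minus_diff_eq minus_divide_divide)
  have 3: "1 / t * (p - q) / (u - v) = (p - q) / (t * (u - v))" by simp
  have 4: "1 / s * (q - p) / (v - u) = (p - q) / (s * (u - v))"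
  proof -
    have "1 / s * (q - p) / (v - u) = 1 / s * ((q - p) / (v - u))" by (rule times_divide_eq_right[symmetric])
    also have "... = 1 / s * ((p - q) / (u - v))" by (simp only: 2)
    also have "... = (p - q) / (s * (u - v))" by simp
    finally show ?thesis .
  qed
  have 6: "(q - p) / (s * (v - u)) = (p - q) / (s * (u - v))"
    by (metis minus_diff_eq minus_divide_divide mult_minus_right)
  have 5: "s * (q - p) / (t - s) = s * (p - q) / (s - t)" by (metis 1 times_divide_eq_right)
  show ?thesis unfolding mH1_def shiftX_def shiftY_def
    by (simp only: 3 4 5 if_True if_False numeral_One[symmetric] numeral_eq_iff semiring_norm simp_thms) (simp add: 6)
qed

lemma Lax_mult: "Lax u s p lam * Lax v t q lam = mat_of_rows_list 4
  [[u - s*(u+p-lam)*t, -u*(v+q-lam) + s*(u+p-lam)*t*v, 0, 0],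
   [1 - s*t, -(v+q-lam) + s*t*v, 0, 0],
   [0, 0, v - (u+p-lam), -t*(v+q-lam) + (u+p-lam)*t],
   [0, 0, s*v - s*u, -s*t*(v+q-lam) + s*u*t]]"
  unfolding Lax_def
  apply (rule eq_matI)
  apply (auto simp: mat_of_rows_list_def scalar_prod_def less_Suc_eq numeral_eq_Suc row_def col_def)
  done
lemma mat4_eq: "mat_of_rows_list 4 [[a11,a12,a13,a14],[a21,a22,a23,a24],[a31,a32,a33,a34],[a41,a42,a43,a44::'a]] =
   mat_of_rows_list 4 [[b11,b12,b13,b14],[b21,b22,b23,b24],[b31,b32,b33,b34],[b41,b42,b43,b44]] \<longleftrightarrow>
   a11=b11 \<and> a12=b12 \<and> a13=b13 \<and> a14=b14 \<and> a21=b21 \<and> a22=b22 \<and> a23=b23 \<and> a24=b24 \<and>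
   a31=b31 \<and> a32=b32 \<and> a33=b33 \<and> a34=b34 \<and> a41=b41 \<and> a42=b42 \<and> a43=b43 \<and> a44=b44"
  (is "?A = ?B \<longleftrightarrow> _")
proof
  assume h: "?A = ?B"
  have "\<And>i j. i < 4 \<Longrightarrow> j < 4 \<Longrightarrow> ?A $$ (i,j) = ?B $$ (i,j)" using h by simp
  from this[of 0 0] this[of 0 1] this[of 0 2] this[of 0 3] this[of 1 0] this[of 1 1] this[of 1 2] this[of 1 3]
    this[of 2 0] this[of 2 1] this[of 2 2] this[of 2 3] this[of 3 0] this[of 3 1] this[of 3 2] this[of 3 3]
  show "a11=b11 \<and> a12=b12 \<and> a13=b13 \<and> a14=b14 \<and> a21=b21 \<and> a22=b22 \<and> a23=b23 \<and> a24=b24 \<and>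
   a31=b31 \<and> a32=b32 \<and> a33=b33 \<and> a34=b34 \<and> a41=b41 \<and> a42=b42 \<and> a43=b43 \<and> a44=b44"
    by (simp add: mat_of_rows_list_def)
qed simp

lemma lax_entries:
  fixes u v s t p q lam K r :: complex
  assumes "s - t \<noteq> 0" "u - v \<noteq> 0" "s \<noteq> 0" "t \<noteq> 0"
  and K: "K = 1 + (p-q)/(u-v)" and r: "r = (p-q)/(s-t)"
  shows
   "v + t * r - K/t * (v + t * r + p - lam) * t = u + s * r - K/s * (u + s * r + q - lam) * s"
   "- (v + t * r) * (v + q - lam) + K/t * (v + t * r + p - lam) * t * v =
        - (u + s * r) * (u + p - lam) + K/s * (u + s * r + q - lam) * s * u"
   "1 - K/t * t = 1 - K/s * s"
   "- (v + q - lam) + K/t * t * v = - (u + p - lam) + K/s * s * u"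
   "v - (v + t * r + p - lam) = u - (u + s * r + q - lam)"
   "- t * (v + q - lam) + (v + t * r + p - lam) * t = - s * (u + p - lam) + (u + s * r + q - lam) * s"
   "K/t * v - K/t * (v + t * r) = K/s * u - K/s * (u + s * r)"
   "- (K/t) * t * (v + q - lam) + K/t * (v + t * r) * t = - (K/s) * s * (u + p - lam) + K/s * (u + s * r) * s"
  using assms unfolding K r by (simp_all add: divide_simps) (simp_all add: algebra_simps)

lemma part4:
  assumes g: "mH1_generic u s v t"
  shows "(\<forall>lam. Lax u2 s2 p lam * Lax v t q lam = Lax v1 t1 q lam * Lax u s p lam)
           \<longleftrightarrow> (u2, s2, v1, t1) = mH1 p q u s v t"
proof -
  have nz: "s - t \<noteq> 0" "u - v \<noteq> 0" "s \<noteq> 0" "t \<noteq> 0" using g unfolding mH1_generic_def by auto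
  show ?thesis
  proof
    assume H: "\<forall>lam. Lax u2 s2 p lam * Lax v t q lam = Lax v1 t1 q lam * Lax u s p lam"
    have H0: "Lax u2 s2 p 0 * Lax v t q 0 = Lax v1 t1 q 0 * Lax u s p 0" using H by blast
    note H1 = H0[unfolded Lax_mult mat4_eq]
    note H2 = H1[simplified]
    have e1: "s2 * t = t1 * s" using H2 by blast
    have e2: "- v - q + s2 * t * v = - u - p + t1 * s * u" using H2 by blast
    have e3: "v - (u2 + p) = u - (v1 + q)" using H2 by blast
    have e4: "(u2 + p) * t - t * (v + q) = (v1 + q) * s - s * (u + p)" using H2 by blast
    have w: "s2*(t*(u-v)) = (u-v) + (p-q)" using e1 e2 by Groebner_Basis.algebra
    have w2: "t1*(s*(u-v)) = (u-v) + (p-q)" using e1 e2 by Groebner_Basis.algebra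
    have x: "(u2 - v)*(s-t) = t*(p-q)" using e3 e4 by Groebner_Basis.algebra
    have x2: "(v1 - u)*(s-t) = s*(p-q)" using e3 e4 by Groebner_Basis.algebra
    have "u2 = v + t*(p-q)/(s-t)" using x nz by (simp add: field_simps)
    moreover have "v1 = u + s*(p-q)/(s-t)" using x2 nz by (simp add: field_simps)
    moreover have "s2 = 1/t + (p-q)/(t*(u-v))"
    proof (rule mult_right_cancel[THEN iffD1])
      show "t*(u-v) \<noteq> 0" using nz by simp
      show "s2 * (t * (u - v)) = (1 / t + (p - q) / (t * (u - v))) * (t * (u - v))"
        unfolding w using nz by (simp add: divide_simps)
    qed
    moreover have "t1 = 1/s + (p-q)/(s*(u-v))"
    proof (rule mult_right_cancel[THEN iffD1])
      show "s*(u-v) \<noteq> 0" using nz by simp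
      show "t1 * (s * (u - v)) = (1 / s + (p - q) / (s * (u - v))) * (s * (u - v))"
        unfolding w2 using nz by (simp add: divide_simps)
    qed
    ultimately show "(u2, s2, v1, t1) = mH1 p q u s v t" unfolding mH1_def by simp
  next
    assume "(u2, s2, v1, t1) = mH1 p q u s v t"
    then have E: "u2 = v + t * (p - q) / (s - t)" "s2 = 1 / t + (p - q) / (t * (u - v))"
     "v1 = u + s * (p - q) / (s - t)" "t1 = 1 / s + (p - q) / (s * (u - v))"
      unfolding mH1_def by auto
    define r where "r = (p-q)/(s-t)"
    define K where "K = 1 + (p-q)/(u-v)"
    have hu2: "u2 = v + t*r" unfolding E r_def by simp
    have hv1: "v1 = u + s*r" unfolding E r_def by simp
    have hs2: "s2 = K/t" unfolding E K_def using nz by (simp add: divide_simps)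
    have ht1: "t1 = K/s" unfolding E K_def using nz by (simp add: divide_simps)
    note LE = lax_entries[OF nz(1,2,3,4) K_def r_def]
    show "\<forall>lam. Lax u2 s2 p lam * Lax v t q lam = Lax v1 t1 q lam * Lax u s p lam"
    proof
      fix lam
      show "Lax u2 s2 p lam * Lax v t q lam = Lax v1 t1 q lam * Lax u s p lam"
        unfolding Lax_mult mat4_eq hu2 hv1 hs2 ht1
        by (intro conjI refl) (rule LE)+
    qed
  qed
qed

lemma part5a:
  assumes cg: "companion_generic p q u s v1 t1"
  shows "(mH1_generic u s v t \<and> (u2, s2, v1, t1) = mH1 p q u s v t)
           \<longleftrightarrow> (u2, s2, v, t) = companion p q u s v1 t1"
proof -
  have s0: "s \<noteq> 0" using cg unfolding companion_generic_def by auto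
  define D where "D = v1 - u"
  define c where "c = s*t1 - 1"
  have Dc1: "v1 = u + D" unfolding D_def by simp
  have Dc2: "t1 = (c+1)/s" unfolding c_def using s0 by simp
  note Dc = Dc1 Dc2
  have nz: "p - q \<noteq> 0" "s \<noteq> 0" "D \<noteq> 0" "c \<noteq> 0" "D - (p - q) \<noteq> 0" "c + 1 \<noteq> 0"
    using cg unfolding companion_generic_def D_def c_def by (auto simp: algebra_simps)
  have C: "companion p q u s v1 t1 = (u + D - (p-q)*(c+1)/c, (c+1)*D/(s*(D-(p-q))), u - (p-q)/c, s*(D-(p-q))/D)"
    unfolding companion_def Dc(1,2) using nz by (simp add: divide_simps) (simp add: algebra_simps)
  show ?thesis
  proof
    assume H: "mH1_generic u s v t \<and> (u2, s2, v1, t1) = mH1 p q u s v t"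
    have nz2: "s - t \<noteq> 0" "u - v \<noteq> 0" "t \<noteq> 0" using H unfolding mH1_generic_def by auto
    have E: "u2 = v + t * (p - q) / (s - t)" "s2 = 1 / t + (p - q) / (t * (u - v))"
     "u + D = u + s * (p - q) / (s - t)" "(c+1)/s = 1 / s + (p - q) / (s * (u - v))"
      using H unfolding mH1_def Dc by auto
    have "D*(s-t) = s*(p-q)" using E(3) nz2 by (simp add: field_simps)
    then have tt: "t = s*(D-(p-q))/D" using nz by (simp add: field_simps)
    have "(c+1)/s * s = (1/s + (p - q) / (s * (u - v))) * s" using E(4) by simp
    moreover have "(c+1)/s * s = c + 1" using nz(2) by simp
    moreover have "(1/s + (p - q) / (s * (u - v))) * s = 1 + (p - q) / (u - v)" using nz(2) by (simp add: distrib_right)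
    ultimately have "c + 1 = 1 + (p - q) / (u - v)" by simp
    then have "c = (p - q) / (u - v)" by simp
    then have "c*(u-v) = p - q" using nz2 by simp
    then have vv: "v = u - (p-q)/c" using nz by (simp add: field_simps)
    have "u2 = u + D - (p-q)*(c+1)/c" unfolding E(1) tt vv using nz
      by (simp add: divide_simps) (simp add: algebra_simps)
    moreover have "s2 = (c+1)*D/(s*(D-(p-q)))" unfolding E(2) tt vv using nz
      by (simp add: divide_simps) (simp add: algebra_simps)
    ultimately show "(u2, s2, v, t) = companion p q u s v1 t1" unfolding C using tt vv by simp
  next
    assume "(u2, s2, v, t) = companion p q u s v1 t1"
    then have E: "u2 = u + D - (p-q)*(c+1)/c" "s2 = (c+1)*D/(s*(D-(p-q)))" "v = u - (p-q)/c" "t = s*(D-(p-q))/D"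
      unfolding C by auto
    have st: "s - t = s*(p-q)/D" unfolding E using nz by (simp add: divide_simps) (simp add: algebra_simps)
    have uv: "u - v = (p-q)/c" unfolding E by simp
    have g: "mH1_generic u s v t" unfolding mH1_generic_def using st uv nz E(4) by auto
    have "mH1 p q u s v t = (u2, s2, v1, t1)" unfolding mH1_def st uv unfolding E Dc(1,2) using nz
      by (simp add: divide_simps) (simp add: algebra_simps)
    then show "mH1_generic u s v t \<and> (u2, s2, v1, t1) = mH1 p q u s v t" using g by simp
  qed
qed


theorem proposition3p1:
  fixes p q :: complex
  shows
    \<comment> \<open>(1)\<close>
    "(\<forall>u s v t u2 s2 v1 t1.
        mH1_generic u s v t \<and> (u2, s2, v1, t1) = mH1 p q u s v t \<longrightarrow>
          (t1 \<noteq> 0 \<longrightarrow> s2 / t1 = s / t) \<and>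
          u2 - v1 + (p - q) / 2 = - (u - v + (p - q) / 2))
     \<and>
    \<comment> \<open>(2)\<close>
     (\<forall>u s v t u2 s2 v1 t1.
        mH1_generic u s v t \<and> (u2, s2, v1, t1) = mH1 p q u s v t \<and> t1 \<noteq> 0 \<longrightarrow>
          (t * u = s * v \<longleftrightarrow> u2 * s2 = t1 * v1))
     \<and>
    \<comment> \<open>(3): the multi-dimensional extension for i=1,j=2 is the system, and it is compatible\<close>
     (\<forall>u s v t. mH1 p q u s v t =
        (shiftX (\<lambda>a. if a = 1 then u else v) (\<lambda>a. if a = 1 then s else t) (\<lambda>a. if a = 1 then p else q) 1 2,
         shiftY (\<lambda>a. if a = 1 then u else v) (\<lambda>a. if a = 1 then s else t) (\<lambda>a. if a = 1 then p else q) 1 2,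
         shiftX (\<lambda>a. if a = 1 then u else v) (\<lambda>a. if a = 1 then s else t) (\<lambda>a. if a = 1 then p else q) 2 1,
         shiftY (\<lambda>a. if a = 1 then u else v) (\<lambda>a. if a = 1 then s else t) (\<lambda>a. if a = 1 then p else q) 2 1))
     \<and>
     (\<forall>(n::nat) X Y P i j k.
        i \<in> {1..n} \<and> j \<in> {1..n} \<and> k \<in> {1..n} \<and> i \<noteq> j \<and> i \<noteq> k \<and> j \<noteq> k \<and>
        cube_generic X Y P i j k \<longrightarrow>
          Xjk X Y P i j k = Xjk X Y P i k j \<and> Yjk X Y P i j k = Yjk X Y P i k j)
     \<and>
    \<comment> \<open>(4)\<close>
     (\<forall>u s v t u2 s2 v1 t1.
        mH1_generic u s v t \<longrightarrow>
          ((\<forall>lam. Lax u2 s2 p lam * Lax v t q lam = Lax v1 t1 q lam * Lax u s p lam)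
           \<longleftrightarrow> (u2, s2, v1, t1) = mH1 p q u s v t))
     \<and>
    \<comment> \<open>(5a): the companion map is the solution of the system for (u2,s2,v,t)\<close>
     (\<forall>u s v1 t1 u2 s2 v t.
        companion_generic p q u s v1 t1 \<longrightarrow>
          ((mH1_generic u s v t \<and> (u2, s2, v1, t1) = mH1 p q u s v t)
           \<longleftrightarrow> (u2, s2, v, t) = companion p q u s v1 t1))
     \<and>
    \<comment> \<open>(5b)\<close>
     yang_baxter Rc Rc_generic"
    apply (intro conjI)
  subgoal using part1 by blast
  subgoal using part2 by blast
  subgoal using part3a by blast
  subgoal using part3b by blast
  subgoal using part4 by blast
  subgoal using part5a by blast
  subgoal using YB by blast
  done

end
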